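(* Let $p\ge3$ and let $\mathcal{C}_p$ be the directed cycle with vertex set $\{1,\dots,p\}$ and edges $1\to2,2\to3,\dots,p-1\to p,p\to1$ (no bidirected edges). Then $\tau(\mathcal{C}_p)=2$, and if $n<2$ then $\hat\ell(\mathcal{C}_p\mid S_{0,n})=\infty$ almost surely.
   Context: For a mixed graph $\mathcal{G}=(V,D,B)$ with $V=\{1,\dots,p\}$: $\mathbb{R}^D_{\mathrm{reg}}$ is the set of real $p\times p$ matrices $\Lambda$ with $\lambda_{ij}=0$ whenever $i\to j\notin D$ and $I-\Lambda$ invertible; $PD(B)$ is the set of positive definite $\Omega$ with $\omega_{ij}=0$ for $i\neq j$, $\{i,j\}\notin B$ (for $B=\emptyset$: positive definite diagonal matrices); $PD(\mathcal{G})=\{(I-\Lambda)^{-T}\Omega(I-\Lambda)^{-1}:\Lambda\in\mathbb{R}^D_{\mathrm{reg}},\Omega\in PD(B)\}$. For an i.i.d. sample $X^{(1)},\dots,X^{(n)}$ from an absolutely continuous distribution on $\mathbb{R}^p$, $S_{0,n}=\frac1n\sum_s X^{(s)}(X^{(s)})^T$; $\ell(\Sigma\mid S)=-\log\det\Sigma-\mathrm{trace}(\Sigma^{-1}S)$; $\hat\ell(\mathcal{G}\mid S)=\sup_{\Sigma\in PD(\mathcal{G})}\ell(\Sigma\mid S)$; $\tau(\mathcal{G})=\min\{N\in\mathbb{N}:\hat\ell(\mathcal{G}\mid S_{0,n})<\infty\text{ a.s. for all }n\ge N\}$. *)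

theory Defs
  imports "HOL-Probability.Probability" "Jordan_Normal_Form.Gauss_Jordan_Elimination" "Jordan_Normal_Form.Determinant"
begin

(* Vertices of a mixed graph on p nodes are 0,...,p-1 (paper: 1,...,p, shifted by one).
   D : directed edges, (i,j) \<in> D means i \<rightarrow> j.
   B : bidirected edges, {i,j} \<in> B is encoded as (i,j) \<in> B or (j,i) \<in> B. *)

definition mat_inv :: "real mat \<Rightarrow> real mat" where
  "mat_inv A = the (mat_inverse A)"

definition mat_trace :: "real mat \<Rightarrow> real" where
  "mat_trace A = (\<Sum>i<dim_row A. A $$ (i,i))"

definition pos_def_mat :: "nat \<Rightarrow> real mat \<Rightarrow> bool" where
  "pos_def_mat p \<Omega> \<longleftrightarrow> \<Omega> \<in> carrier_mat p p \<and> transpose_mat \<Omega> = \<Omega> \<and>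
     (\<forall>v \<in> carrier_vec p. v \<noteq> 0\<^sub>v p \<longrightarrow> v \<bullet> (\<Omega> *\<^sub>v v) > 0)"

definition reg_params :: "nat \<Rightarrow> (nat \<times> nat) set \<Rightarrow> real mat set" where
  "reg_params p D = {\<Lambda> \<in> carrier_mat p p.
      (\<forall>i<p. \<forall>j<p. (i,j) \<notin> D \<longrightarrow> \<Lambda> $$ (i,j) = 0) \<and> invertible_mat (1\<^sub>m p - \<Lambda>)}"

definition PD_B :: "nat \<Rightarrow> (nat \<times> nat) set \<Rightarrow> real mat set" where
  "PD_B p B = {\<Omega>. pos_def_mat p \<Omega> \<and>
      (\<forall>i<p. \<forall>j<p. i \<noteq> j \<and> (i,j) \<notin> B \<and> (j,i) \<notin> B \<longrightarrow> \<Omega> $$ (i,j) = 0)}"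

definition PD_G :: "nat \<Rightarrow> (nat \<times> nat) set \<Rightarrow> (nat \<times> nat) set \<Rightarrow> real mat set" where
  "PD_G p D B = {transpose_mat (mat_inv (1\<^sub>m p - \<Lambda>)) * \<Omega> * mat_inv (1\<^sub>m p - \<Lambda>) | \<Lambda> \<Omega>.
      \<Lambda> \<in> reg_params p D \<and> \<Omega> \<in> PD_B p B}"

definition loglik :: "real mat \<Rightarrow> real mat \<Rightarrow> real" where
  "loglik \<Sigma> S = - ln (Determinant.det \<Sigma>) - mat_trace (mat_inv \<Sigma> * S)"

definition max_loglik :: "nat \<Rightarrow> (nat \<times> nat) set \<Rightarrow> (nat \<times> nat) set \<Rightarrow> real mat \<Rightarrow> ereal" where
  "max_loglik p D B S = (SUP \<Sigma> \<in> PD_G p D B. ereal (loglik \<Sigma> S))"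

(* S_{0,n}; the sample is X^(0),...,X^(n-1), each a vector indexed by 0..p-1 *)
definition sample_cov :: "nat \<Rightarrow> nat \<Rightarrow> (nat \<Rightarrow> nat \<Rightarrow> real) \<Rightarrow> real mat" where
  "sample_cov p n X = mat p p (\<lambda>(i,j). (1 / real n) * (\<Sum>s<n. X s i * X s j))"

definition lebesgue_p :: "nat \<Rightarrow> (nat \<Rightarrow> real) measure" where
  "lebesgue_p p = PiM {..<p} (\<lambda>_. lborel)"

definition abs_cont_distr :: "nat \<Rightarrow> (nat \<Rightarrow> real) measure \<Rightarrow> bool" where
  "abs_cont_distr p \<mu> \<longleftrightarrow> prob_space \<mu> \<and> sets \<mu> = sets (lebesgue_p p) \<and>
      absolutely_continuous (lebesgue_p p) \<mu>"

definition iid_sample :: "nat \<Rightarrow> (nat \<Rightarrow> real) measure \<Rightarrow> (nat \<Rightarrow> nat \<Rightarrow> real) measure" where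
  "iid_sample n \<mu> = PiM {..<n} (\<lambda>_. \<mu>)"

definition tau :: "nat \<Rightarrow> (nat \<times> nat) set \<Rightarrow> (nat \<times> nat) set \<Rightarrow> (nat \<Rightarrow> real) measure \<Rightarrow> nat" where
  "tau p D B \<mu> = (LEAST N. \<forall>n\<ge>N.
      AE X in iid_sample n \<mu>. max_loglik p D B (sample_cov p n X) < \<infinity>)"

definition cycle_edges :: "nat \<Rightarrow> (nat \<times> nat) set" where
  "cycle_edges p = {(i, Suc i mod p) | i. i < p}"

end

theory Submission
  imports Defs
begin


lemma PD_B_empty:
  assumes "\<Omega> \<in> PD_B p {}"
  shows "\<Omega> \<in> carrier_mat p p" "\<And>i j. i<p \<Longrightarrow> j<p \<Longrightarrow> i\<noteq>j \<Longrightarrow> \<Omega>$$(i,j) = 0"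
    "\<And>i. i<p \<Longrightarrow> \<Omega>$$(i,i) > 0"
proof -
  show C: "\<Omega> \<in> carrier_mat p p" using assms unfolding PD_B_def pos_def_mat_def by auto
  show Z: "\<And>i j. i<p \<Longrightarrow> j<p \<Longrightarrow> i\<noteq>j \<Longrightarrow> \<Omega>$$(i,j) = 0" using assms unfolding PD_B_def by auto
  fix i assume i: "i<p"
  have "unit_vec p i \<bullet> (\<Omega> *\<^sub>v unit_vec p i) > 0"
    using assms i unfolding PD_B_def pos_def_mat_def
  proof -
    have "unit_vec p i \<noteq> 0\<^sub>v p" using i
      by (metis index_unit_vec(1) index_zero_vec(1) zero_neq_one)
    then show ?thesis using assms unfolding PD_B_def pos_def_mat_def by auto
  qed
  moreover have "unit_vec p i \<bullet> (\<Omega> *\<^sub>v unit_vec p i) = \<Omega>$$(i,i)"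
  proof -
    have "(\<Omega> *\<^sub>v unit_vec p i) \<in> carrier_vec p" using C by simp
    then have "unit_vec p i \<bullet> (\<Omega> *\<^sub>v unit_vec p i) = (\<Omega> *\<^sub>v unit_vec p i) $ i" using i by simp
    also have "\<dots> = \<Omega>$$(i,i)" using C i by simp
    finally show ?thesis .
  qed
  ultimately show "\<Omega>$$(i,i) > 0" by simp
qed

lemma mat_inv_props:
  assumes A: "A \<in> carrier_mat n n" and inv: "invertible_mat A"
  shows "A * mat_inv A = 1\<^sub>m n" "mat_inv A * A = 1\<^sub>m n" "mat_inv A \<in> carrier_mat n n"
proof -
  obtain B where AB: "A * B = 1\<^sub>m n" and BA: "B * A = 1\<^sub>m (dim_row B)"
    using inv A unfolding invertible_mat_def inverts_mat_def by auto
  have "dim_row B = n" using BA A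
    by (metis carrier_matD(2) index_mult_mat(3) index_one_mat(3))
  moreover have "dim_col B = n" using AB
    by (metis index_mult_mat(3) index_one_mat(3))
  ultimately have B: "B \<in> carrier_mat n n" by auto
  have "A \<in> Units (ring_mat TYPE(real) n ())"
    using A B AB BA \<open>dim_row B = n\<close> unfolding Units_def ring_mat_def by auto
  then obtain C where "mat_inverse A = Some C"
    using mat_inverse(1)[OF A, of "()"] by (cases "mat_inverse A") auto
  then have "mat_inv A = C" unfolding mat_inv_def by simp
  then show "A * mat_inv A = 1\<^sub>m n" "mat_inv A * A = 1\<^sub>m n" "mat_inv A \<in> carrier_mat n n"
    using mat_inverse(2)[OF A \<open>mat_inverse A = Some C\<close>] by auto
qed

lemma mult_entry:
  fixes A :: "real mat"
  assumes "A \<in> carrier_mat n m" "B \<in> carrier_mat m k" "i < n" "j < k"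
  shows "(A * B) $$ (i,j) = (\<Sum>l<m. A $$ (i,l) * B $$ (l,j))"
  using assms by (simp add: scalar_prod_def lessThan_atLeast0)

lemma prod_list_upt: "prod_list (map f [0..<n]) = (\<Prod>i<n. f i)"
  by (induction n) auto

lemma mult_cancel_left:
  fixes X :: "real mat"
  assumes "B * A = 1\<^sub>m n" "A \<in> carrier_mat n n" "B \<in> carrier_mat n n" "X \<in> carrier_mat n m"
  shows "B * (A * X) = X"
proof -
  have "B * (A * X) = (B * A) * X" by (rule assoc_mult_mat[symmetric]) (use assms in auto)
  also have "\<dots> = 1\<^sub>m n * X" by (simp only: assms(1))
  also have "\<dots> = X" using assms(4) by auto
  finally show ?thesis .
qed

lemma mat_inv_unique:
  assumes X: "X \<in> carrier_mat n n" and Y: "Y \<in> carrier_mat n n" and XY: "X * Y = 1\<^sub>m n" and YX: "Y * X = 1\<^sub>m n"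
  shows "mat_inv X = Y"
proof -
  have "invertible_mat X" unfolding invertible_mat_def inverts_mat_def square_mat.simps
    using X Y XY YX by auto
  note P = mat_inv_props[OF X this]
  have "mat_inv X = mat_inv X * (X * Y)" using XY P by simp
  also have "\<dots> = Y" by (rule mult_cancel_left) (use P X Y in auto)
  finally show ?thesis .
qed

lemma diag_inv:
  fixes \<Omega> :: "real mat"
  assumes C: "\<Omega> \<in> carrier_mat p p" and Z: "\<And>i j. i<p \<Longrightarrow> j<p \<Longrightarrow> i\<noteq>j \<Longrightarrow> \<Omega>$$(i,j) = 0"
    and P: "\<And>i. i<p \<Longrightarrow> \<Omega>$$(i,i) > 0"
  defines "D \<equiv> mat p p (\<lambda>(i,j). if i = j then 1 / \<Omega>$$(i,i) else 0)"
  shows "D * \<Omega> = 1\<^sub>m p" "\<Omega> * D = 1\<^sub>m p" "D \<in> carrier_mat p p"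
proof -
  show "D \<in> carrier_mat p p" unfolding D_def by simp
  show "D * \<Omega> = 1\<^sub>m p"
  proof (rule eq_matI)
    fix i j assume i: "i < dim_row (1\<^sub>m p)" and j: "j < dim_col (1\<^sub>m p)"
    have "(D * \<Omega>) $$ (i,j) = (\<Sum>l<p. D $$ (i,l) * \<Omega> $$ (l,j))"
      using i j C by (intro mult_entry) (auto simp: D_def)
    also have "\<dots> = (\<Sum>l<p. if l = i then 1 / \<Omega>$$(i,i) * \<Omega> $$ (i,j) else 0)"
      using i by (intro sum.cong) (auto simp: D_def)
    also have "\<dots> = 1\<^sub>m p $$ (i,j)" using i j Z P[of i] by (auto simp: field_simps)
    finally show "(D * \<Omega>) $$ (i,j) = 1\<^sub>m p $$ (i,j)" .
  qed (use C in \<open>auto simp: D_def\<close>)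
  show "\<Omega> * D = 1\<^sub>m p"
  proof (rule eq_matI)
    fix i j assume i: "i < dim_row (1\<^sub>m p)" and j: "j < dim_col (1\<^sub>m p)"
    have "(\<Omega> * D) $$ (i,j) = (\<Sum>l<p. \<Omega> $$ (i,l) * D $$ (l,j))"
      using i j C by (intro mult_entry) (auto simp: D_def)
    also have "\<dots> = (\<Sum>l<p. if l = j then \<Omega> $$ (i,j) / \<Omega>$$(j,j) else 0)"
      using j by (intro sum.cong) (auto simp: D_def)
    also have "\<dots> = 1\<^sub>m p $$ (i,j)" using i j Z P[of j] by (auto simp: field_simps)
    finally show "(\<Omega> * D) $$ (i,j) = 1\<^sub>m p $$ (i,j)" .
  qed (use C in \<open>auto simp: D_def\<close>)
qed

lemma loglik_formula:
  fixes \<Lambda> \<Omega> S :: "real mat"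
  assumes \<Lambda>: "\<Lambda> \<in> reg_params p E" and \<Omega>: "\<Omega> \<in> PD_B p {}" and S: "S \<in> carrier_mat p p"
  shows "loglik (transpose_mat (mat_inv (1\<^sub>m p - \<Lambda>)) * \<Omega> * mat_inv (1\<^sub>m p - \<Lambda>)) S =
     ln ((Determinant.det (1\<^sub>m p - \<Lambda>))^2) - (\<Sum>j<p. ln (\<Omega>$$(j,j)))
     - (\<Sum>j<p. (\<Sum>i<p. \<Sum>k<p. (1\<^sub>m p - \<Lambda>)$$(i,j) * (1\<^sub>m p - \<Lambda>)$$(k,j) * S$$(k,i)) / \<Omega>$$(j,j))"
proof -
  define A where "A = 1\<^sub>m p - \<Lambda>"
  have \<Lambda>c: "\<Lambda> \<in> carrier_mat p p" using \<Lambda> unfolding reg_params_def by auto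
  have Ac: "A \<in> carrier_mat p p" unfolding A_def using \<Lambda>c by auto
  have Ai: "invertible_mat A" using \<Lambda> unfolding reg_params_def A_def by auto
  define B where "B = mat_inv A"
  note BP = mat_inv_props[OF Ac Ai, folded B_def]
  have Bc: "B \<in> carrier_mat p p" and AB: "A * B = 1\<^sub>m p" and BA: "B * A = 1\<^sub>m p" using BP by auto
  note \<Omega>P = PD_B_empty[OF \<Omega>]
  have \<Omega>c: "\<Omega> \<in> carrier_mat p p" using \<Omega>P by auto
  define D where "D = mat p p (\<lambda>(i,j). if i = j then 1 / \<Omega>$$(i,i) else 0)"
  note DP = diag_inv[OF \<Omega>P, folded D_def]
  have Dc: "D \<in> carrier_mat p p" and D\<Omega>: "D * \<Omega> = 1\<^sub>m p" and \<Omega>D: "\<Omega> * D = 1\<^sub>m p" using DP by auto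
  define \<Sigma> where "\<Sigma> = transpose_mat B * \<Omega> * B"
  define K where "K = A * (D * transpose_mat A)"
  have \<Sigma>c: "\<Sigma> \<in> carrier_mat p p" unfolding \<Sigma>_def using Bc \<Omega>c by auto
  have Kc: "K \<in> carrier_mat p p" unfolding K_def using Ac Dc by auto
  have AtBt: "transpose_mat A * transpose_mat B = 1\<^sub>m p"
    using transpose_mult[OF Bc Ac] BA by simp
  have BtAt: "transpose_mat B * transpose_mat A = 1\<^sub>m p"
    using transpose_mult[OF Ac Bc] AB by simp
  have "\<Sigma> * K = transpose_mat B * (\<Omega> * (B * (A * (D * transpose_mat A))))"
    unfolding \<Sigma>_def K_def using Bc \<Omega>c Ac Dc by (simp add: assoc_mult_mat[of _ p p _ p _ p])
  also have "\<dots> = transpose_mat B * (\<Omega> * (D * transpose_mat A))"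
    using mult_cancel_left[OF BA Ac Bc, of "D * transpose_mat A" p] Dc Ac by simp
  also have "\<dots> = transpose_mat B * transpose_mat A"
    using mult_cancel_left[OF \<Omega>D Dc \<Omega>c, of "transpose_mat A" p] Ac by simp
  finally have \<Sigma>K: "\<Sigma> * K = 1\<^sub>m p" using BtAt by simp
  have "K * \<Sigma> = A * (D * (transpose_mat A * (transpose_mat B * (\<Omega> * B))))"
    unfolding \<Sigma>_def K_def using Bc \<Omega>c Ac Dc by (simp add: assoc_mult_mat[of _ p p _ p _ p])
  also have "\<dots> = A * (D * (\<Omega> * B))"
    using mult_cancel_left[OF AtBt, of "\<Omega> * B" p] Bc \<Omega>c Ac by simp
  also have "\<dots> = A * B"
    using mult_cancel_left[OF D\<Omega> \<Omega>c Dc, of B p] Bc by simp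
  finally have K\<Sigma>: "K * \<Sigma> = 1\<^sub>m p" using AB by simp
  have invS: "mat_inv \<Sigma> = K" by (rule mat_inv_unique[OF \<Sigma>c Kc \<Sigma>K K\<Sigma>])
  have "Determinant.det A * Determinant.det B = 1"
    using det_mult[OF Ac Bc] AB by simp
  note h = this
  then have dA: "Determinant.det A \<noteq> 0" by auto
  have detB: "Determinant.det B = 1 / Determinant.det A" using h dA by (simp add: eq_divide_eq mult.commute)
  have ut: "upper_triangular \<Omega>" unfolding upper_triangular_def using \<Omega>P \<Omega>c by auto
  have det\<Omega>: "Determinant.det \<Omega> = (\<Prod>j<p. \<Omega>$$(j,j))"
    using det_upper_triangular[OF ut \<Omega>c] \<Omega>c by (simp add: diag_mat_def prod_list_upt)
  have "Determinant.det \<Sigma> = Determinant.det (transpose_mat B * \<Omega>) * Determinant.det B"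
    unfolding \<Sigma>_def by (rule det_mult[of _ p]) (use Bc \<Omega>c in auto)
  also have "\<dots> = Determinant.det B * Determinant.det \<Omega> * Determinant.det B"
    using det_mult[of "transpose_mat B" p \<Omega>] det_transpose[OF Bc] Bc \<Omega>c by simp
  finally have det\<Sigma>: "Determinant.det \<Sigma> = (1 / (Determinant.det A)^2) * (\<Prod>j<p. \<Omega>$$(j,j))"
    using detB det\<Omega> by (simp add: power2_eq_square)
  have pos\<Omega>: "\<And>j. j \<in> {..<p} \<Longrightarrow> \<Omega>$$(j,j) \<noteq> 0" using \<Omega>P(3) by (metis lessThan_iff less_irrefl)
  have "ln (Determinant.det \<Sigma>) = ln (1 / (Determinant.det A)^2) + ln (\<Prod>j<p. \<Omega>$$(j,j))"
    unfolding det\<Sigma> using dA pos\<Omega> by (subst ln_mult) auto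
  also have "\<dots> = - ln ((Determinant.det A)^2) + (\<Sum>j<p. ln (\<Omega>$$(j,j)))"
    using dA pos\<Omega> ln_prod[of "{..<p}" "\<lambda>j. \<Omega>$$(j,j)"] by (simp add: ln_div)
  finally have lndet: "ln (Determinant.det \<Sigma>) = - ln ((Determinant.det A)^2) + (\<Sum>j<p. ln (\<Omega>$$(j,j)))" .
  have Kent: "K $$ (i,k) = (\<Sum>j<p. A$$(i,j) * A$$(k,j) / \<Omega>$$(j,j))" if i: "i<p" and k: "k<p" for i k
  proof -
    have DAt: "(D * transpose_mat A) $$ (l,k) = A$$(k,l) / \<Omega>$$(l,l)" if l: "l<p" for l
    proof -
      have "(D * transpose_mat A) $$ (l,k) = (\<Sum>m<p. D$$(l,m) * transpose_mat A $$ (m,k))"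
        by (rule mult_entry) (use l k Dc Ac in auto)
      also have "\<dots> = (\<Sum>m<p. if m = l then A$$(k,l) / \<Omega>$$(l,l) else 0)"
        by (rule sum.cong) (use l k Ac in \<open>auto simp: D_def\<close>)
      finally show ?thesis using l by simp
    qed
    have "K $$ (i,k) = (\<Sum>j<p. A$$(i,j) * (D * transpose_mat A) $$ (j,k))"
      unfolding K_def by (rule mult_entry) (use i k Dc Ac in auto)
    also have "\<dots> = (\<Sum>j<p. A$$(i,j) * A$$(k,j) / \<Omega>$$(j,j))"
      by (rule sum.cong) (auto simp: DAt)
    finally show ?thesis .
  qed
  have "mat_trace (K * S) = (\<Sum>i<p. (K * S) $$ (i,i))"
    unfolding mat_trace_def using Kc by simp
  also have "\<dots> = (\<Sum>i<p. \<Sum>k<p. K $$ (i,k) * S $$ (k,i))"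
    by (rule sum.cong[OF refl], rule mult_entry) (use Kc S in auto)
  also have "\<dots> = (\<Sum>i<p. \<Sum>k<p. \<Sum>j<p. A$$(i,j) * A$$(k,j) * S$$(k,i) / \<Omega>$$(j,j))"
    by (rule sum.cong[OF refl], rule sum.cong[OF refl]) (simp add: Kent sum_distrib_right)
  also have "\<dots> = (\<Sum>i<p. \<Sum>j<p. \<Sum>k<p. A$$(i,j) * A$$(k,j) * S$$(k,i) / \<Omega>$$(j,j))"
    by (rule sum.cong[OF refl], rule sum.swap)
  also have "\<dots> = (\<Sum>j<p. \<Sum>i<p. \<Sum>k<p. A$$(i,j) * A$$(k,j) * S$$(k,i) / \<Omega>$$(j,j))"
    by (rule sum.swap)
  also have "\<dots> = (\<Sum>j<p. (\<Sum>i<p. \<Sum>k<p. A$$(i,j) * A$$(k,j) * S$$(k,i)) / \<Omega>$$(j,j))"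
    by (simp add: sum_divide_distrib)
  finally have tr: "mat_trace (K * S) = \<dots>" .
  show ?thesis
    unfolding loglik_def A_def[symmetric] B_def[symmetric] \<Sigma>_def[symmetric] invS lndet tr
    by simp
qed

lemma quad_sample:
  fixes A :: "real mat"
  shows "(\<Sum>i<p. \<Sum>k<p. A$$(i,j) * A$$(k,j) * sample_cov p n X $$ (k,i))
     = (1 / real n) * (\<Sum>s<n. (\<Sum>i<p. A$$(i,j) * X s i)^2)"
proof -
  have "(\<Sum>i<p. \<Sum>k<p. A$$(i,j) * A$$(k,j) * sample_cov p n X $$ (k,i))
      = (\<Sum>i<p. \<Sum>k<p. \<Sum>s<n. (1 / real n) * ((A$$(i,j) * X s i) * (A$$(k,j) * X s k)))"
    by (intro sum.cong refl) (simp add: sample_cov_def sum_distrib_left algebra_simps)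
  also have "\<dots> = (\<Sum>i<p. \<Sum>s<n. \<Sum>k<p. (1 / real n) * ((A$$(i,j) * X s i) * (A$$(k,j) * X s k)))"
    by (rule sum.cong[OF refl], rule sum.swap)
  also have "\<dots> = (\<Sum>s<n. \<Sum>i<p. \<Sum>k<p. (1 / real n) * ((A$$(i,j) * X s i) * (A$$(k,j) * X s k)))"
    by (rule sum.swap)
  also have "\<dots> = (1 / real n) * (\<Sum>s<n. \<Sum>i<p. \<Sum>k<p. (A$$(i,j) * X s i) * (A$$(k,j) * X s k))"
    by (simp add: sum_distrib_left)
  also have "\<dots> = (1 / real n) * (\<Sum>s<n. (\<Sum>i<p. A$$(i,j) * X s i)^2)"
    by (simp only: power2_eq_square sum_product)
  finally show ?thesis .
qed

lemma det_bound_rows: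
  fixes A :: "real mat"
  assumes A: "A \<in> carrier_mat n n"
  shows "\<bar>Determinant.det A\<bar> \<le> fact n * (\<Prod>i<n. \<Sum>j<n. \<bar>A$$(i,j)\<bar>)"
proof -
  let ?P = "{\<pi>. \<pi> permutes {0..<n}}"
  let ?r = "\<lambda>i. \<Sum>j<n. \<bar>A$$(i,j)\<bar>"
  have "Determinant.det A = (\<Sum>\<pi>\<in>?P. of_int (sign \<pi>) * (\<Prod>i=0..<n. A$$(i,\<pi> i)))"
    using A by (simp add: det_def)
  then have "\<bar>Determinant.det A\<bar> \<le> (\<Sum>\<pi>\<in>?P. \<bar>of_int (sign \<pi>) * (\<Prod>i=0..<n. A$$(i,\<pi> i))\<bar>)"
    by (simp add: sum_abs)
  also have "\<dots> = (\<Sum>\<pi>\<in>?P. (\<Prod>i=0..<n. \<bar>A$$(i,\<pi> i)\<bar>))"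
    by (intro sum.cong refl) (simp add: abs_mult abs_prod sign_def)
  also have "\<dots> \<le> (\<Sum>\<pi>\<in>?P. (\<Prod>i=0..<n. ?r i))"
  proof (intro sum_mono prod_mono conjI)
    fix \<pi> i assume \<pi>: "\<pi> \<in> ?P" and i: "i \<in> {0..<n}"
    have "\<pi> i \<in> {0..<n}" using \<pi> i by (simp add: permutes_in_image)
    then show "\<bar>A$$(i,\<pi> i)\<bar> \<le> ?r i"
      by (intro member_le_sum) auto
  qed simp
  also have "\<dots> = fact n * (\<Prod>i<n. ?r i)"
    by (simp add: card_permutations atLeast0LessThan)
  finally show ?thesis .
qed

lemma cyc_mem: "(i,j) \<in> cycle_edges p \<longleftrightarrow> i < p \<and> j = Suc i mod p"
  by (auto simp: cycle_edges_def)

lemma suc_mod: "l < p \<Longrightarrow> Suc l mod p = (if Suc l = p then 0 else Suc l)"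
  by (auto simp: mod_if)

lemma suc_mod_inj: "l < p \<Longrightarrow> i < p \<Longrightarrow> Suc l mod p = Suc i mod p \<Longrightarrow> l = i"
  by (auto simp: suc_mod split: if_splits)

lemma suc_mod_neq: "2 \<le> p \<Longrightarrow> i < p \<Longrightarrow> Suc i mod p \<noteq> i"
  by (auto simp: suc_mod)

lemma suc_mod_image: "(\<lambda>i. Suc i mod p) ` {..<p} = {..<p}"
proof (cases "p = 0")
  case False
  show ?thesis
    by (rule endo_inj_surj) (use False suc_mod_inj in \<open>auto simp: inj_on_def\<close>)
qed simp

lemma sum_reindex_suc: "(\<Sum>j<p. f j) = (\<Sum>i<p. f (Suc i mod p))"
proof -
  have "(\<Sum>j<p. f j) = (\<Sum>j\<in>(\<lambda>i. Suc i mod p) ` {..<p}. f j)" by (simp only: suc_mod_image)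
  also have "\<dots> = (\<Sum>i<p. f (Suc i mod p))"
    by (rule sum.reindex_cong[OF _ refl refl]) (use suc_mod_inj in \<open>auto simp: inj_on_def\<close>)
  finally show ?thesis .
qed

lemma reg_zero:
  assumes "\<Lambda> \<in> reg_params p (cycle_edges p)" "i < p" "j < p" "j \<noteq> Suc i mod p"
  shows "\<Lambda>$$(i,j) = 0"
  using assms by (auto simp: reg_params_def cyc_mem)

lemma row_bound:
  fixes \<Lambda> :: "real mat"
  assumes L: "\<Lambda> \<in> reg_params p (cycle_edges p)" and i: "i < p"
  shows "(\<Sum>j<p. \<bar>(1\<^sub>m p - \<Lambda>)$$(i,j)\<bar>) \<le> 1 + \<bar>\<Lambda>$$(i, Suc i mod p)\<bar>"
proof -
  have Lc: "\<Lambda> \<in> carrier_mat p p" using L by (auto simp: reg_params_def)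
  have "(\<Sum>j<p. \<bar>(1\<^sub>m p - \<Lambda>)$$(i,j)\<bar>) \<le>
     (\<Sum>j<p. (if j = i then 1 else 0) + (if j = Suc i mod p then \<bar>\<Lambda>$$(i, Suc i mod p)\<bar> else 0))"
  proof (rule sum_mono)
    fix j assume j: "j \<in> {..<p}"
    have e: "(1\<^sub>m p - \<Lambda>)$$(i,j) = (if i = j then 1 else 0) - \<Lambda>$$(i,j)" using i j Lc by auto
    show "\<bar>(1\<^sub>m p - \<Lambda>)$$(i,j)\<bar> \<le> (if j = i then 1 else 0) + (if j = Suc i mod p then \<bar>\<Lambda>$$(i, Suc i mod p)\<bar> else 0)"
      unfolding e using reg_zero[OF L i, of j] j by auto
  qed
  also have "\<dots> = 1 + \<bar>\<Lambda>$$(i, Suc i mod p)\<bar>"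
    using i by (simp add: sum.distrib)
  finally show ?thesis .
qed

lemma col_formula:
  fixes \<Lambda> :: "real mat"
  assumes L: "\<Lambda> \<in> reg_params p (cycle_edges p)" and i: "i < p" and p: "2 \<le> p"
  shows "(\<Sum>l<p. (1\<^sub>m p - \<Lambda>)$$(l, Suc i mod p) * x l) = x (Suc i mod p) - \<Lambda>$$(i, Suc i mod p) * x i"
proof -
  have Lc: "\<Lambda> \<in> carrier_mat p p" using L by (auto simp: reg_params_def)
  have si: "Suc i mod p < p" using i by simp
  have ne: "Suc i mod p \<noteq> i" by (rule suc_mod_neq[OF p i])
  have "(\<Sum>l<p. (1\<^sub>m p - \<Lambda>)$$(l, Suc i mod p) * x l) =
     (\<Sum>l<p. (if l = Suc i mod p then x (Suc i mod p) else 0) + (if l = i then - \<Lambda>$$(i, Suc i mod p) * x i else 0))"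
  proof (rule sum.cong[OF refl])
    fix l assume l: "l \<in> {..<p}"
    have e: "(1\<^sub>m p - \<Lambda>)$$(l,Suc i mod p) = (if l = Suc i mod p then 1 else 0) - \<Lambda>$$(l,Suc i mod p)"
      using si l Lc by auto
    have z: "\<Lambda>$$(l,Suc i mod p) = 0" if li: "l \<noteq> i"
    proof -
      have "Suc i mod p \<noteq> Suc l mod p" using suc_mod_inj[of l p i] l i li by auto
      then show ?thesis using reg_zero[OF L _ si, of l] l by auto
    qed
    have z2: "\<Lambda>$$(Suc i mod p,Suc i mod p) = 0"
      using reg_zero[OF L si si] suc_mod_neq[OF p si] by auto
    show "(1\<^sub>m p - \<Lambda>)$$(l, Suc i mod p) * x l = (if l = Suc i mod p then x (Suc i mod p) else 0) + (if l = i then - \<Lambda>$$(i, Suc i mod p) * x i else 0)"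
      unfolding e using z z2 ne by auto
  qed
  also have "\<dots> = x (Suc i mod p) - \<Lambda>$$(i, Suc i mod p) * x i"
    using i si by (simp add: sum.distrib)
  finally show ?thesis .
qed

lemma cs2: "((x::real)*a + y*b)^2 \<le> (x^2+y^2)*(a^2+b^2)"
proof -
  have "(x^2+y^2)*(a^2+b^2) - (x*a + y*b)^2 = (x*b - y*a)^2" by (simp add: power2_eq_square algebra_simps)
  then show ?thesis by (metis diff_ge_0_iff_ge zero_le_power2)
qed

lemma two_sample:
  fixes u1 v1 u2 v2 l :: real
  assumes D: "u1 * v2 - u2 * v1 \<noteq> 0"
  shows "(u1 * v2 - u2 * v1)^2 / (2*(u1^2+u2^2+v1^2+v2^2)) * (1+\<bar>l\<bar>)^2 \<le> (u1 - l * v1)^2 + (u2 - l * v2)^2"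
proof -
  define a where "a = u1 - l * v1"
  define b where "b = u2 - l * v2"
  define d where "d = u1 * v2 - u2 * v1"
  define F where "F = u1^2+u2^2+v1^2+v2^2"
  have e1: "d = v2*a + (-v1)*b" unfolding a_def b_def d_def by (simp add: algebra_simps)
  have e2: "l*d = u2*a + (-u1)*b" unfolding a_def b_def d_def by (simp add: algebra_simps)
  have c1: "d^2 \<le> (v2^2+v1^2)*(a^2+b^2)" using cs2[of v2 a "-v1" b] e1 by simp
  have "(l*d)^2 \<le> (u2^2+u1^2)*(a^2+b^2)" using cs2[of u2 a "-u1" b] e2 by simp
  then have c2: "l^2*d^2 \<le> (u2^2+u1^2)*(a^2+b^2)" by (simp add: power_mult_distrib)
  have "d^2*(1+l^2) \<le> F*(a^2+b^2)" using c1 c2 unfolding F_def by (simp add: algebra_simps)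
  moreover have "(1+\<bar>l\<bar>)^2 \<le> 2*(1+l^2)"
  proof -
    have "2*(1+l^2) - (1+\<bar>l\<bar>)^2 = (1 - \<bar>l\<bar>)^2" by (simp add: power2_eq_square algebra_simps)
    then show ?thesis by (metis diff_ge_0_iff_ge zero_le_power2)
  qed
  ultimately have "d^2*(1+\<bar>l\<bar>)^2 \<le> 2*F*(a^2+b^2)"
  proof -
    assume h1: "d^2*(1+l^2) \<le> F*(a^2+b^2)" and h2: "(1+\<bar>l\<bar>)^2 \<le> 2*(1+l^2)"
    have "d^2*(1+\<bar>l\<bar>)^2 \<le> d^2*(2*(1+l^2))" using h2 by (rule mult_left_mono) simp
    also have "\<dots> = 2*(d^2*(1+l^2))" by simp
    also have "\<dots> \<le> 2*(F*(a^2+b^2))" using h1 by simp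
    finally show ?thesis by simp
  qed
  moreover have Fp: "F > 0"
  proof -
    have "u1 \<noteq> 0 \<or> u2 \<noteq> 0" using D by auto
    then have "u1^2 + u2^2 > 0" by (simp add: sum_power2_gt_zero_iff)
    moreover have "v1^2 + v2^2 \<ge> 0" by simp
    ultimately show ?thesis unfolding F_def using zero_le_power2[of v1] zero_le_power2[of v2] by linarith
  qed
  ultimately have "(d^2*(1+\<bar>l\<bar>)^2)/(2*F) \<le> a^2+b^2"
    by (subst pos_divide_le_eq) (auto simp: mult.commute)
  then have "d^2/(2*F)*(1+\<bar>l\<bar>)^2 \<le> a^2+b^2" by simp
  then show ?thesis unfolding a_def b_def d_def F_def .
qed

lemma Fpos:
  fixes u1 v1 u2 v2 :: real
  assumes D: "u1 * v2 - u2 * v1 \<noteq> 0"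
  shows "0 < u1^2+u2^2+v1^2+v2^2"
proof -
  have "u1 \<noteq> 0 \<or> u2 \<noteq> 0" using D by auto
  then have "u1^2 + u2^2 > 0" by (simp add: sum_power2_gt_zero_iff)
  then show ?thesis using zero_le_power2[of v1] zero_le_power2[of v2] by linarith
qed

lemma omega_opt:
  fixes R w :: real
  assumes "R > 0" "w > 0"
  shows "- ln w - R / w \<le> - ln R - 1"
proof -
  have "ln (R/w) \<le> R/w - 1" using assms by (intro ln_le_minus_one) auto
  then show ?thesis using assms by (simp add: ln_div)
qed

lemma det_nz:
  fixes \<Lambda> :: "real mat"
  assumes "\<Lambda> \<in> reg_params p E"
  shows "Determinant.det (1\<^sub>m p - \<Lambda>) \<noteq> 0"
proof -
  have Lc: "\<Lambda> \<in> carrier_mat p p" using assms by (auto simp: reg_params_def)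
  have Ac: "1\<^sub>m p - \<Lambda> \<in> carrier_mat p p" using Lc by auto
  have "invertible_mat (1\<^sub>m p - \<Lambda>)" using assms by (auto simp: reg_params_def)
  note P = mat_inv_props[OF Ac this]
  have "Determinant.det (1\<^sub>m p - \<Lambda>) * Determinant.det (mat_inv (1\<^sub>m p - \<Lambda>)) = 1"
    using det_mult[OF Ac P(3)] P(1) by simp
  then show ?thesis by auto
qed


lemma bounded_case:
  assumes p: "2 \<le> p" and n: "2 \<le> n"
    and nd: "\<forall>i<p. X 0 (Suc i mod p) * X 1 i - X 1 (Suc i mod p) * X 0 i \<noteq> 0"
  shows "max_loglik p (cycle_edges p) {} (sample_cov p n X) < \<infinity>"
proof -
  define S where "S = sample_cov p n X"
  have Sc: "S \<in> carrier_mat p p" unfolding S_def sample_cov_def by simp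
  define F where "F i = (X 0 (Suc i mod p))^2 + (X 1 (Suc i mod p))^2 + (X 0 i)^2 + (X 1 i)^2" for i
  define c where "c i = (X 0 (Suc i mod p) * X 1 i - X 1 (Suc i mod p) * X 0 i)^2 / (2 * F i) / real n" for i
  have cpos: "c i > 0" if i: "i < p" for i
  proof -
    have "F i > 0" unfolding F_def using Fpos[of "X 0 (Suc i mod p)" "X 1 i" "X 1 (Suc i mod p)" "X 0 i"] nd i by auto
    then show ?thesis unfolding c_def using nd i n by auto
  qed
  define C where "C = 2 * ln (fact p) - (\<Sum>i<p. ln (c i)) - real p"
  have "loglik \<Sigma> S \<le> C" if \<Sigma>: "\<Sigma> \<in> PD_G p (cycle_edges p) {}" for \<Sigma>
  proof -
    obtain \<Lambda> \<Omega> where L: "\<Lambda> \<in> reg_params p (cycle_edges p)" and O: "\<Omega> \<in> PD_B p {}"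
      and \<Sigma>def: "\<Sigma> = transpose_mat (mat_inv (1\<^sub>m p - \<Lambda>)) * \<Omega> * mat_inv (1\<^sub>m p - \<Lambda>)"
      using \<Sigma> unfolding PD_G_def by auto
    define A where "A = 1\<^sub>m p - \<Lambda>"
    have Lc: "\<Lambda> \<in> carrier_mat p p" using L by (auto simp: reg_params_def)
    have Ac: "A \<in> carrier_mat p p" unfolding A_def using Lc by auto
    define lam where "lam i = \<Lambda>$$(i, Suc i mod p)" for i
    define Q where "Q j = (\<Sum>i<p. \<Sum>k<p. A$$(i,j) * A$$(k,j) * S$$(k,i))" for j
    define w where "w j = \<Omega>$$(j,j)" for j
    have wpos: "w j > 0" if "j < p" for j using PD_B_empty(3)[OF O that] unfolding w_def .
    have ll: "loglik \<Sigma> S = ln ((Determinant.det A)^2) - (\<Sum>j<p. ln (w j)) - (\<Sum>j<p. Q j / w j)"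
      unfolding \<Sigma>def A_def Q_def w_def by (rule loglik_formula[OF L O Sc])
    have Qlow: "Q (Suc i mod p) \<ge> c i * (1 + \<bar>lam i\<bar>)^2" if i: "i < p" for i
    proof -
      have "Q (Suc i mod p) = (1 / real n) * (\<Sum>s<n. (\<Sum>l<p. A$$(l,Suc i mod p) * X s l)^2)"
        unfolding Q_def S_def by (rule quad_sample)
      also have "\<dots> = (1 / real n) * (\<Sum>s<n. (X s (Suc i mod p) - lam i * X s i)^2)"
        unfolding A_def lam_def using col_formula[OF L i p] by simp
      finally have qe: "Q (Suc i mod p) = (1 / real n) * (\<Sum>s<n. (X s (Suc i mod p) - lam i * X s i)^2)" .
      have "(\<Sum>s\<in>{0,1}. (X s (Suc i mod p) - lam i * X s i)^2) \<le> (\<Sum>s<n. (X s (Suc i mod p) - lam i * X s i)^2)"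
        by (rule sum_mono2) (use n in auto)
      then have "(X 0 (Suc i mod p) - lam i * X 0 i)^2 + (X 1 (Suc i mod p) - lam i * X 1 i)^2
          \<le> (\<Sum>s<n. (X s (Suc i mod p) - lam i * X s i)^2)" by simp
      moreover have "(X 0 (Suc i mod p) * X 1 i - X 1 (Suc i mod p) * X 0 i)^2 / (2 * F i) * (1 + \<bar>lam i\<bar>)^2
          \<le> (X 0 (Suc i mod p) - lam i * X 0 i)^2 + (X 1 (Suc i mod p) - lam i * X 1 i)^2"
        unfolding F_def using two_sample[of "X 0 (Suc i mod p)" "X 1 i" "X 1 (Suc i mod p)" "X 0 i" "lam i"] nd i
        by (simp add: ac_simps)
      ultimately have "(X 0 (Suc i mod p) * X 1 i - X 1 (Suc i mod p) * X 0 i)^2 / (2 * F i) * (1 + \<bar>lam i\<bar>)^2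
          \<le> (\<Sum>s<n. (X s (Suc i mod p) - lam i * X s i)^2)" by linarith
      then have "(1 / real n) * ((X 0 (Suc i mod p) * X 1 i - X 1 (Suc i mod p) * X 0 i)^2 / (2 * F i) * (1 + \<bar>lam i\<bar>)^2)
          \<le> (1 / real n) * (\<Sum>s<n. (X s (Suc i mod p) - lam i * X s i)^2)"
        by (rule mult_left_mono) simp
      then show ?thesis unfolding qe c_def by (simp add: field_simps)
    qed
    have Qpos: "Q (Suc i mod p) > 0" if i: "i < p" for i
    proof -
      have "c i * (1 + \<bar>lam i\<bar>)^2 > 0" using cpos[OF i] by simp
      then show ?thesis using Qlow[OF i] by linarith
    qed
    have "- (\<Sum>j<p. ln (w j)) - (\<Sum>j<p. Q j / w j) = (\<Sum>j<p. - ln (w j) - Q j / w j)"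
      by (simp add: sum_subtractf sum_negf)
    also have "\<dots> = (\<Sum>i<p. - ln (w (Suc i mod p)) - Q (Suc i mod p) / w (Suc i mod p))"
      by (rule sum_reindex_suc)
    also have "\<dots> \<le> (\<Sum>i<p. - ln (Q (Suc i mod p)) - 1)"
      by (rule sum_mono, rule omega_opt) (use Qpos wpos in auto)
    also have "\<dots> \<le> (\<Sum>i<p. - ln (c i) - 2 * ln (1 + \<bar>lam i\<bar>) - 1)"
    proof (rule sum_mono)
      fix i assume i: "i \<in> {..<p}"
      have "ln (c i * (1 + \<bar>lam i\<bar>)^2) \<le> ln (Q (Suc i mod p))"
        using Qlow[of i] cpos[of i] Qpos[of i] i by (subst ln_le_cancel_iff) auto
      moreover have "ln (c i * (1 + \<bar>lam i\<bar>)^2) = ln (c i) + 2 * ln (1 + \<bar>lam i\<bar>)"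
        using cpos[of i] i by (simp add: ln_mult ln_realpow)
      ultimately show "- ln (Q (Suc i mod p)) - 1 \<le> - ln (c i) - 2 * ln (1 + \<bar>lam i\<bar>) - 1" by linarith
    qed
    also have "\<dots> = - (\<Sum>i<p. ln (c i)) - 2 * (\<Sum>i<p. ln (1 + \<bar>lam i\<bar>)) - real p"
      by (simp add: sum_subtractf sum_negf sum_distrib_left)
    finally have part1: "- (\<Sum>j<p. ln (w j)) - (\<Sum>j<p. Q j / w j) \<le> - (\<Sum>i<p. ln (c i)) - 2 * (\<Sum>i<p. ln (1 + \<bar>lam i\<bar>)) - real p" .
    define M where "M = fact p * (\<Prod>i<p. 1 + \<bar>lam i\<bar>)"
    have Mpos: "M > 0" unfolding M_def by (intro mult_pos_pos prod_pos) auto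
    have "\<bar>Determinant.det A\<bar> \<le> fact p * (\<Prod>i<p. \<Sum>j<p. \<bar>A$$(i,j)\<bar>)" by (rule det_bound_rows[OF Ac])
    also have "\<dots> \<le> M" unfolding M_def
    proof (rule mult_left_mono)
      show "(\<Prod>i<p. \<Sum>j<p. \<bar>A$$(i,j)\<bar>) \<le> (\<Prod>i<p. 1 + \<bar>lam i\<bar>)"
      proof (rule prod_mono)
        fix i assume i: "i \<in> {..<p}"
        have "0 \<le> (\<Sum>j<p. \<bar>A$$(i,j)\<bar>)" by (rule sum_nonneg) simp
        moreover have "(\<Sum>j<p. \<bar>A$$(i,j)\<bar>) \<le> 1 + \<bar>lam i\<bar>"
          using row_bound[OF L, of i] i unfolding A_def lam_def by simp
        ultimately show "0 \<le> (\<Sum>j<p. \<bar>A$$(i,j)\<bar>) \<and> (\<Sum>j<p. \<bar>A$$(i,j)\<bar>) \<le> 1 + \<bar>lam i\<bar>" by simp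
      qed
    qed simp
    finally have dM: "\<bar>Determinant.det A\<bar> \<le> M" .
    have dnz: "Determinant.det A \<noteq> 0" unfolding A_def by (rule det_nz[OF L])
    have "ln ((Determinant.det A)^2) = ln (\<bar>Determinant.det A\<bar>^2)" by simp
    also have "\<dots> = 2 * ln \<bar>Determinant.det A\<bar>" using dnz by (subst ln_realpow) auto
    also have "\<dots> \<le> 2 * ln M" using dM dnz Mpos by simp
    also have "\<dots> = 2 * ln (fact p) + 2 * (\<Sum>i<p. ln (1 + \<bar>lam i\<bar>))"
    proof -
      have nz: "1 + \<bar>lam i\<bar> \<noteq> 0" for i using abs_ge_zero[of "lam i"] by linarith
      show ?thesis unfolding M_def using nz ln_prod[of "{..<p}" "\<lambda>i. 1 + \<bar>lam i\<bar>"]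
        by (simp add: ln_mult)
    qed
    finally have part2: "ln ((Determinant.det A)^2) \<le> 2 * ln (fact p) + 2 * (\<Sum>i<p. ln (1 + \<bar>lam i\<bar>))" .
    show ?thesis unfolding ll C_def using part1 part2 by linarith
  qed
  then have "max_loglik p (cycle_edges p) {} (sample_cov p n X) \<le> ereal C"
    unfolding max_loglik_def S_def[symmetric] by (intro SUP_least) simp
  then show ?thesis by (rule le_less_trans) simp
qed

lemma unit_invertible:
  fixes A :: "real mat"
  assumes A: "A \<in> carrier_mat p p" and d: "Determinant.det A \<noteq> 0"
  shows "invertible_mat A"
proof -
  have "A \<in> Units (ring_mat TYPE(real) p ())" by (rule det_non_zero_imp_unit[OF A d])
  then obtain B where B: "B \<in> carrier_mat p p" and BA: "B * A = 1\<^sub>m p" and AB: "A * B = 1\<^sub>m p"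
    unfolding Units_def ring_mat_def by auto
  show ?thesis unfolding invertible_mat_def inverts_mat_def square_mat.simps
    using A B AB BA by auto
qed

lemma diag_PD:
  fixes d :: "nat \<Rightarrow> real"
  assumes pos: "\<And>i. i < p \<Longrightarrow> d i > 0"
  shows "mat p p (\<lambda>(i,j). if i = j then d i else 0) \<in> PD_B p {}"
proof -
  define \<Omega> where "\<Omega> = mat p p (\<lambda>(i,j). if i = j then d i else (0::real))"
  have C: "\<Omega> \<in> carrier_mat p p" unfolding \<Omega>_def by simp
  have T: "transpose_mat \<Omega> = \<Omega>" by (rule eq_matI) (auto simp: \<Omega>_def)
  have P: "v \<bullet> (\<Omega> *\<^sub>v v) > 0" if v: "v \<in> carrier_vec p" and nz: "v \<noteq> 0\<^sub>v p" for v
  proof -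
    have ent: "(\<Omega> *\<^sub>v v) $ i = d i * v $ i" if i: "i < p" for i
    proof -
      have "(\<Omega> *\<^sub>v v) $ i = row \<Omega> i \<bullet> v" using i C by simp
      also have "\<dots> = (\<Sum>j\<in>{0..<p}. row \<Omega> i $ j * v $ j)" using v by (simp add: scalar_prod_def)
      also have "\<dots> = (\<Sum>j\<in>{0..<p}. if j = i then d i * v $ i else 0)"
        by (rule sum.cong) (use i in \<open>auto simp: \<Omega>_def\<close>)
      also have "\<dots> = d i * v $ i" using i by simp
      finally show ?thesis .
    qed
    obtain k where k: "k < p" "v $ k \<noteq> 0"
    proof (rule ccontr)
      assume "\<not> thesis"
      with that have "\<forall>k<p. v $ k = 0" by blast
      then have "v = 0\<^sub>v p" using v by (intro eq_vecI) auto
      with nz show False by simp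
    qed
    have "v \<bullet> (\<Omega> *\<^sub>v v) = (\<Sum>i\<in>{0..<p}. v $ i * (\<Omega> *\<^sub>v v) $ i)"
      using C by (simp add: scalar_prod_def)
    also have "\<dots> = (\<Sum>i\<in>{0..<p}. d i * (v $ i)^2)"
      by (rule sum.cong) (auto simp: ent power2_eq_square)
    also have "\<dots> > 0"
    proof (rule sum_pos2[of _ k])
      show "0 < d k * (v $ k)^2" using k pos[of k] by simp
      show "\<And>i. i \<in> {0..<p} \<Longrightarrow> 0 \<le> d i * (v $ i)^2" using pos by (simp add: less_imp_le)
    qed (use k in auto)
    finally show ?thesis .
  qed
  show ?thesis unfolding PD_B_def pos_def_mat_def \<Omega>_def[symmetric]
    using C T P by (auto simp: \<Omega>_def)
qed

lemma aux_ineq: "(a::real) = T - q \<Longrightarrow> 1 * (N + \<bar>q\<bar>) \<le> T \<Longrightarrow> q \<le> \<bar>q\<bar> \<Longrightarrow> N \<le> a"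
  by simp

lemma unbounded_case:
  assumes p: "2 \<le> p" and n: "n \<le> 1" and nz: "n = 1 \<Longrightarrow> \<forall>i<p. X 0 i \<noteq> 0"
  shows "max_loglik p (cycle_edges p) {} (sample_cov p n X) = \<infinity>"
proof -
  define x where "x = X 0"
  define S where "S = sample_cov p n X"
  have Sc: "S \<in> carrier_mat p p" unfolding S_def sample_cov_def by simp
  define \<Lambda> :: "real mat" where "\<Lambda> = mat p p (\<lambda>(i,j). if Suc i = j then x j / x i else 0)"
  define A where "A = 1\<^sub>m p - \<Lambda>"
  have \<Lambda>c: "\<Lambda> \<in> carrier_mat p p" unfolding \<Lambda>_def by simp
  have Ac: "A \<in> carrier_mat p p" unfolding A_def using \<Lambda>c by auto
  have Aent: "A$$(i,j) = (if i = j then 1 else 0) - (if Suc i = j then x j / x i else 0)"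
    if "i < p" "j < p" for i j
    using that \<Lambda>c by (simp add: A_def \<Lambda>_def)
  have ut: "upper_triangular A" unfolding upper_triangular_def using Ac Aent by auto
  have detA: "Determinant.det A = 1"
  proof -
    have "Determinant.det A = prod_list (diag_mat A)" by (rule det_upper_triangular[OF ut Ac])
    also have "\<dots> = (\<Prod>i<p. A$$(i,i))" using Ac by (simp add: diag_mat_def prod_list_upt)
    also have "\<dots> = (\<Prod>i<p. 1)" by (rule prod.cong) (auto simp: Aent)
    finally show ?thesis by simp
  qed
  have L: "\<Lambda> \<in> reg_params p (cycle_edges p)"
  proof -
    have "\<Lambda>$$(i,j) = 0" if "i < p" "j < p" "(i,j) \<notin> cycle_edges p" for i j
    proof -
      have "Suc i \<noteq> j" using that by (auto simp: cyc_mem)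
      then show ?thesis using that by (simp add: \<Lambda>_def)
    qed
    moreover have "invertible_mat (1\<^sub>m p - \<Lambda>)" using unit_invertible[OF Ac] detA by (simp add: A_def)
    ultimately show ?thesis unfolding reg_params_def using \<Lambda>c by auto
  qed
  define Q where "Q j = (\<Sum>i<p. \<Sum>k<p. A$$(i,j) * A$$(k,j) * S$$(k,i))" for j
  have Qz: "Q j = 0" if j: "0 < j" "j < p" for j
  proof -
    have "Q j = (1 / real n) * (\<Sum>s<n. (\<Sum>l<p. A$$(l,j) * X s l)^2)"
      unfolding Q_def S_def by (rule quad_sample)
    also have "\<dots> = 0"
    proof (cases "n = 0")
      case False
      then have n1: "n = 1" using n by simp
      have xnz: "x (j - 1) \<noteq> 0" using nz[OF n1] j unfolding x_def by auto
      have "(\<Sum>l<p. A$$(l,j) * x l) = (\<Sum>l<p. (if l = j then x j else 0) - (if l = j - 1 then x j else 0))"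
      proof (rule sum.cong[OF refl])
        fix l assume l: "l \<in> {..<p}"
        have e: "(Suc l = j) = (l = j - 1)" using j by auto
        show "A$$(l,j) * x l = (if l = j then x j else 0) - (if l = j - 1 then x j else 0)"
          using l j xnz by (auto simp: Aent e left_diff_distrib)
      qed
      also have "\<dots> = 0" using j by (simp add: sum_subtractf)
      finally have "(\<Sum>l<p. A$$(l,j) * X 0 l) = 0" unfolding x_def .
      then show ?thesis using n1 by simp
    qed simp
    finally show ?thesis .
  qed
  obtain m where pm: "p = Suc m" and m: "1 \<le> m" using p by (cases p) auto
  define \<Omega> where "\<Omega> e = mat p p (\<lambda>(i,j). if i = j then (if i = 0 then 1 else e) else (0::real))" for e
  have \<Omega>PD: "\<Omega> e \<in> PD_B p {}" if "e > 0" for e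
    unfolding \<Omega>_def using that by (intro diag_PD) auto
  have ll: "loglik (transpose_mat (mat_inv A) * \<Omega> e * mat_inv A) S = - real m * ln e - Q 0"
    if e: "e > 0" for e
  proof -
    have "loglik (transpose_mat (mat_inv A) * \<Omega> e * mat_inv A) S =
       ln ((Determinant.det A)^2) - (\<Sum>j<p. ln (\<Omega> e $$(j,j))) - (\<Sum>j<p. Q j / \<Omega> e $$(j,j))"
      unfolding A_def Q_def by (rule loglik_formula[OF L \<Omega>PD[OF e] Sc])
    also have "(\<Sum>j<p. ln (\<Omega> e $$(j,j))) = real m * ln e"
      unfolding pm by (subst sum.lessThan_Suc_shift) (simp add: \<Omega>_def pm)
    also have "(\<Sum>j<p. Q j / \<Omega> e $$(j,j)) = Q 0"
      unfolding pm by (subst sum.lessThan_Suc_shift) (simp add: \<Omega>_def pm Qz)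
    finally show ?thesis using detA by simp
  qed
  show ?thesis
    unfolding max_loglik_def S_def[symmetric]
  proof (rule SUP_PInfty)
    fix N :: nat
    define e where "e = exp (- (real N + \<bar>Q 0\<bar>))"
    have e: "e > 0" unfolding e_def by simp
    have "transpose_mat (mat_inv A) * \<Omega> e * mat_inv A \<in> PD_G p (cycle_edges p) {}"
      unfolding PD_G_def A_def using L \<Omega>PD[OF e] by blast
    moreover have "real N \<le> loglik (transpose_mat (mat_inv A) * \<Omega> e * mat_inv A) S"
    proof -
      have "loglik (transpose_mat (mat_inv A) * \<Omega> e * mat_inv A) S = real m * (real N + \<bar>Q 0\<bar>) - Q 0"
      proof -
        have le: "ln e = - (real N + \<bar>Q 0\<bar>)" unfolding e_def by simp
        show ?thesis unfolding ll[OF e] le by (simp add: algebra_simps)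
      qed
      moreover have "real m * (real N + \<bar>Q 0\<bar>) \<ge> 1 * (real N + \<bar>Q 0\<bar>)"
        by (rule mult_right_mono) (use m in auto)
      ultimately show ?thesis using abs_ge_self[of "Q 0"]
        by (rule aux_ineq)
    qed
    ultimately show "\<exists>\<Sigma>\<in>PD_G p (cycle_edges p) {}. ereal (real N) \<le> ereal (loglik \<Sigma> S)" by auto
  qed
qed





lemma null_section:
  fixes M :: "'i \<Rightarrow> 'a measure"
  assumes sf: "\<And>j. sigma_finite_measure (M j)" and fin: "finite I" and i: "i \<in> I"
    and A: "A \<in> sets (PiM I M)"
    and ae: "AE x in PiM (I - {i}) M. {t \<in> space (M i). x(i := t) \<in> A} \<in> null_sets (M i)"
  shows "A \<in> null_sets (PiM I M)"
proof -
  have ps: "product_sigma_finite M" unfolding product_sigma_finite_def using sf by auto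
  have I: "insert i (I - {i}) = I" using i by auto
  have "emeasure (PiM I M) A = (\<integral>\<^sup>+x. indicator A x \<partial>PiM I M)" using A by simp
  also have "\<dots> = (\<integral>\<^sup>+x. \<integral>\<^sup>+y. indicator A (x(i:=y)) \<partial>M i \<partial>PiM (I - {i}) M)"
  proof -
    have "integral\<^sup>N (PiM (insert i (I - {i})) M) (indicator A) =
        (\<integral>\<^sup>+x. \<integral>\<^sup>+y. indicator A (x(i:=y)) \<partial>M i \<partial>PiM (I - {i}) M)"
      by (rule product_sigma_finite.product_nn_integral_insert[OF ps]) (use fin A I in auto)
    then show ?thesis unfolding I .
  qed
  also have "\<dots> = (\<integral>\<^sup>+x. 0 \<partial>PiM (I - {i}) M)"
  proof (rule nn_integral_cong_AE)
    show "AE x in PiM (I - {i}) M. (\<integral>\<^sup>+y. indicator A (x(i:=y)) \<partial>M i) = 0"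
      using ae
    proof (rule eventually_mono)
      fix x assume N: "{t \<in> space (M i). x(i := t) \<in> A} \<in> null_sets (M i)"
      have "(\<integral>\<^sup>+y. indicator A (x(i:=y)) \<partial>M i) = (\<integral>\<^sup>+y. indicator {t \<in> space (M i). x(i := t) \<in> A} y \<partial>M i)"
        by (rule nn_integral_cong) (auto simp: indicator_def)
      also have "\<dots> = emeasure (M i) {t \<in> space (M i). x(i := t) \<in> A}"
        using N by (simp add: null_setsD2)
      also have "\<dots> = 0" using N by (rule null_setsD1)
      finally show "(\<integral>\<^sup>+y. indicator A (x(i:=y)) \<partial>M i) = 0" .
    qed
  qed
  also have "\<dots> = 0" by simp
  finally show ?thesis using A by (intro null_setsI)
qed

lemma leb_hyper:
  assumes a: "a < p" and b: "b < p" and ab: "a \<noteq> b" and c: "c \<noteq> 0"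
  shows "{y \<in> space (lebesgue_p p). c * y a = e * y b} \<in> null_sets (lebesgue_p p)"
  unfolding lebesgue_p_def
proof (rule null_section[where i = a])
  show "\<And>j. sigma_finite_measure (lborel :: real measure)" by (rule sigma_finite_lborel)
  show "finite {..<p}" by simp
  show "a \<in> {..<p}" using a by simp
  have [measurable]: "(\<lambda>y. y a) \<in> borel_measurable (PiM {..<p} (\<lambda>_. lborel :: real measure))"
    using measurable_component_singleton[of a "{..<p}" "\<lambda>_. lborel"] a by simp
  have [measurable]: "(\<lambda>y. y b) \<in> borel_measurable (PiM {..<p} (\<lambda>_. lborel :: real measure))"
    using measurable_component_singleton[of b "{..<p}" "\<lambda>_. lborel"] b by simp
  show "{y \<in> space (PiM {..<p} (\<lambda>_. lborel :: real measure)). c * y a = e * y b} \<in> sets (PiM {..<p} (\<lambda>_. lborel :: real measure))"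
    by measurable
  show "AE x in PiM ({..<p} - {a}) (\<lambda>_. lborel :: real measure). {t \<in> space (lborel :: real measure). x(a := t) \<in> {y \<in> space (PiM {..<p} (\<lambda>_. lborel :: real measure)). c * y a = e * y b}} \<in> null_sets (lborel :: real measure)"
  proof (rule AE_I2)
    fix x assume x: "x \<in> space (PiM ({..<p} - {a}) (\<lambda>_. lborel :: real measure))"
    have "{t \<in> space (lborel :: real measure). x(a := t) \<in> {y \<in> space (PiM {..<p} (\<lambda>_. lborel :: real measure)). c * y a = e * y b}} = {e * x b / c}"
      using x a ab c by (auto simp: space_PiM PiE_iff extensional_def field_simps)
    moreover have "{e * x b / c} \<in> null_sets (lborel :: real measure)" by (rule null_setsI) auto
    ultimately show "{t \<in> space (lborel :: real measure). x(a := t) \<in> {y \<in> space (PiM {..<p} (\<lambda>_. lborel :: real measure)). c * y a = e * y b}} \<in> null_sets (lborel :: real measure)"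
      by simp
  qed
qed

lemma mu_hyper:
  assumes mu: "abs_cont_distr p \<mu>" and a: "a < p" and b: "b < p" and ab: "a \<noteq> b" and c: "c \<noteq> 0"
  shows "{y \<in> space \<mu>. c * y a = e * y b} \<in> null_sets \<mu>"
proof -
  have se: "sets \<mu> = sets (lebesgue_p p)" and ac: "absolutely_continuous (lebesgue_p p) \<mu>"
    using mu unfolding abs_cont_distr_def by auto
  have sp: "space \<mu> = space (lebesgue_p p)" by (rule sets_eq_imp_space_eq[OF se])
  show ?thesis using leb_hyper[OF a b ab c, of e] ac unfolding sp absolutely_continuous_def by auto
qed

lemma coord_meas:
  assumes mu: "abs_cont_distr p \<mu>" and a: "a < p"
  shows "(\<lambda>y. y a) \<in> borel_measurable \<mu>"
proof -
  have se: "sets \<mu> = sets (lebesgue_p p)" using mu unfolding abs_cont_distr_def by auto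
  have "(\<lambda>y. y a) \<in> borel_measurable (lebesgue_p p)"
    unfolding lebesgue_p_def using measurable_component_singleton[of a "{..<p}" "\<lambda>_. lborel"] a by simp
  moreover have "measurable \<mu> (borel :: real measure) = measurable (lebesgue_p p) borel" by (rule measurable_cong_sets[OF se refl])
  ultimately show ?thesis by simp
qed

lemma sample_coord_meas:
  assumes mu: "abs_cont_distr p \<mu>" and a: "a < p" and s: "s \<in> I"
  shows "(\<lambda>X. X s a) \<in> borel_measurable (PiM I (\<lambda>_. \<mu>))"
  using measurable_compose[OF measurable_component_singleton[OF s] coord_meas[OF mu a]] by simp

lemma mu_sf: "abs_cont_distr p \<mu> \<Longrightarrow> sigma_finite_measure \<mu>"
  unfolding abs_cont_distr_def by (auto intro: prob_space_imp_sigma_finite)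

lemma coord_null:
  assumes mu: "abs_cont_distr p \<mu>" and p: "2 \<le> p" and a: "a < p" and s: "s \<in> I" and fin: "finite I"
  shows "{X \<in> space (PiM I (\<lambda>_. \<mu>)). X s a = 0} \<in> null_sets (PiM I (\<lambda>_. \<mu>))"
proof (rule null_section[where i = s])
  show "\<And>j. sigma_finite_measure \<mu>" using mu_sf[OF mu] .
  have [measurable]: "(\<lambda>X. X s a) \<in> borel_measurable (PiM I (\<lambda>_. \<mu>))" by (rule sample_coord_meas[OF mu a s])
  show "{X \<in> space (PiM I (\<lambda>_. \<mu>)). X s a = 0} \<in> sets (PiM I (\<lambda>_. \<mu>))" by measurable
  show "AE x in PiM (I - {s}) (\<lambda>_. \<mu>). {t \<in> space \<mu>. x(s := t) \<in> {X \<in> space (PiM I (\<lambda>_. \<mu>)). X s a = 0}} \<in> null_sets \<mu>"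
  proof (rule AE_I2)
    fix x assume x: "x \<in> space (PiM (I - {s}) (\<lambda>_. \<mu>))"
    have b: "Suc a mod p < p" "a \<noteq> Suc a mod p" using a p suc_mod_neq[OF p a] by auto
    have "{t \<in> space \<mu>. x(s := t) \<in> {X \<in> space (PiM I (\<lambda>_. \<mu>)). X s a = 0}} = {t \<in> space \<mu>. 1 * t a = 0 * t (Suc a mod p)}"
      using x s by (auto simp: space_PiM PiE_iff extensional_def)
    then show "{t \<in> space \<mu>. x(s := t) \<in> {X \<in> space (PiM I (\<lambda>_. \<mu>)). X s a = 0}} \<in> null_sets \<mu>"
      using mu_hyper[OF mu a b(1) b(2), of 1 0] by simp
  qed
qed (use s fin in auto)

lemma ae_nonzero:
  assumes mu: "abs_cont_distr p \<mu>" and p: "2 \<le> p" and s: "s \<in> I" and fin: "finite I"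
  shows "AE X in PiM I (\<lambda>_. \<mu>). \<forall>i<p. X s i \<noteq> 0"
proof -
  have "AE X in PiM I (\<lambda>_. \<mu>). \<forall>i\<in>{..<p}. X s i \<noteq> 0"
  proof (rule AE_finite_allI)
    fix i assume i: "i \<in> {..<p}"
    show "AE X in PiM I (\<lambda>_. \<mu>). X s i \<noteq> 0"
      by (rule AE_I'[OF coord_null[OF mu p _ s fin, of i]]) (use i in auto)
  qed simp
  then show ?thesis by (rule eventually_mono) auto
qed

lemma ae_det:
  fixes n :: nat
  assumes mu: "abs_cont_distr p \<mu>" and p: "2 \<le> p" and n: "2 \<le> n"
  shows "AE X in PiM {..<n} (\<lambda>_. \<mu>). \<forall>i<p. X 0 (Suc i mod p) * X 1 i - X 1 (Suc i mod p) * X 0 i \<noteq> 0"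
proof -
  let ?M = "PiM {..<n} (\<lambda>_. \<mu>)"
  have "AE X in ?M. \<forall>i\<in>{..<p}. X 0 (Suc i mod p) * X 1 i - X 1 (Suc i mod p) * X 0 i \<noteq> 0"
  proof (rule AE_finite_allI)
    fix i assume "i \<in> {..<p}"
    then have i: "i < p" by simp
    define k where "k = Suc i mod p"
    have k: "k < p" "i \<noteq> k" "k \<noteq> i" unfolding k_def using i p suc_mod_neq[OF p i] by auto
    define E where "E = {X \<in> space ?M. X 0 k * X 1 i - X 1 k * X 0 i = 0}"
    have [measurable]: "(\<lambda>X. X 0 k) \<in> borel_measurable ?M" by (rule sample_coord_meas[OF mu k(1)]) (use n in auto)
    have [measurable]: "(\<lambda>X. X 1 k) \<in> borel_measurable ?M" by (rule sample_coord_meas[OF mu k(1)]) (use n in auto)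
    have [measurable]: "(\<lambda>X. X 0 i) \<in> borel_measurable ?M" by (rule sample_coord_meas[OF mu i]) (use n in auto)
    have [measurable]: "(\<lambda>X. X 1 i) \<in> borel_measurable ?M" by (rule sample_coord_meas[OF mu i]) (use n in auto)
    have "E \<in> null_sets ?M" unfolding E_def
    proof (rule null_section[where i = 1])
      show "\<And>j. sigma_finite_measure \<mu>" using mu_sf[OF mu] .
      show "{X \<in> space ?M. X 0 k * X 1 i - X 1 k * X 0 i = 0} \<in> sets ?M" by measurable
      let ?J = "{..<n} - {1}"
      have ae0: "AE x in PiM ?J (\<lambda>_. \<mu>). x 0 k \<noteq> 0"
        by (rule AE_I'[OF coord_null[OF mu p k(1), of 0 ?J]]) (use n in auto)
      show "AE x in PiM ?J (\<lambda>_. \<mu>). {t \<in> space \<mu>. x(1 := t) \<in> {X \<in> space ?M. X 0 k * X 1 i - X 1 k * X 0 i = 0}} \<in> null_sets \<mu>"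
        using ae0 AE_space
      proof eventually_elim
        case (elim x)
        have "{t \<in> space \<mu>. x(1 := t) \<in> {X \<in> space ?M. X 0 k * X 1 i - X 1 k * X 0 i = 0}} =
            {t \<in> space \<mu>. x 0 k * t i = x 0 i * t k}"
          using elim n by (auto simp: space_PiM PiE_iff extensional_def algebra_simps)
        then show ?case using mu_hyper[OF mu i k(1) k(2) elim(1)] by simp
      qed
    qed (use n in auto)
    then show "AE X in ?M. X 0 (Suc i mod p) * X 1 i - X 1 (Suc i mod p) * X 0 i \<noteq> 0"
      by (rule AE_I') (auto simp: E_def k_def)
  qed simp
  then show ?thesis by (rule eventually_mono) auto
qed

theorem mainTheorem9:
  fixes p :: nat and \<mu> :: "(nat \<Rightarrow> real) measure"
  assumes "p \<ge> 3" and "abs_cont_distr p \<mu>"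
  shows "tau p (cycle_edges p) {} \<mu> = 2 \<and>
    (\<forall>n<2. AE X in iid_sample n \<mu>. max_loglik p (cycle_edges p) {} (sample_cov p n X) = \<infinity>)"
proof -
  have p: "2 \<le> p" using assms(1) by simp
  note mu = assms(2)
  have ps: "prob_space (iid_sample n \<mu>)" for n
    unfolding iid_sample_def using mu unfolding abs_cont_distr_def by (intro prob_space_PiM) auto
  have inf: "AE X in iid_sample n \<mu>. max_loglik p (cycle_edges p) {} (sample_cov p n X) = \<infinity>" if n: "n < 2" for n
  proof (cases "n = 0")
    case True
    show ?thesis by (rule AE_I2) (use unbounded_case[OF p, of 0] True in auto)
  next
    case False
    then have n1: "n = 1" using n by simp
    have "AE X in PiM {..<n} (\<lambda>_. \<mu>). \<forall>i<p. X 0 i \<noteq> 0"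
      by (rule ae_nonzero[OF mu p]) (use n1 in auto)
    then show ?thesis unfolding iid_sample_def
      by (rule eventually_mono) (use unbounded_case[OF p] n1 in auto)
  qed
  have fin: "AE X in iid_sample n \<mu>. max_loglik p (cycle_edges p) {} (sample_cov p n X) < \<infinity>" if n: "2 \<le> n" for n
    using ae_det[OF mu p n] unfolding iid_sample_def
    by (rule eventually_mono) (use bounded_case[OF p n] in auto)
  have "tau p (cycle_edges p) {} \<mu> = 2"
    unfolding tau_def
  proof (rule Least_equality)
    show "\<forall>n\<ge>2. AE X in iid_sample n \<mu>. max_loglik p (cycle_edges p) {} (sample_cov p n X) < \<infinity>"
      using fin by auto
    fix N assume H: "\<forall>n\<ge>N. AE X in iid_sample n \<mu>. max_loglik p (cycle_edges p) {} (sample_cov p n X) < \<infinity>"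
    show "2 \<le> N"
    proof (rule ccontr)
      assume "\<not> 2 \<le> N"
      then have "1 \<ge> N" by simp
      then have "AE X in iid_sample 1 \<mu>. max_loglik p (cycle_edges p) {} (sample_cov p 1 X) < \<infinity>"
        using H by blast
      moreover have "AE X in iid_sample 1 \<mu>. max_loglik p (cycle_edges p) {} (sample_cov p 1 X) = \<infinity>"
        using inf[of 1] by simp
      ultimately have "AE X in iid_sample 1 \<mu>. False" by eventually_elim auto
      then show False using prob_space.AE_False[OF ps[of 1]] by simp
    qed
  qed
  then show ?thesis using inf by auto
qed


end
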